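(* Let $W$ be a real symmetric $n\times n$ matrix with non-negative entries and zero diagonal, let $\lambda\ge 0$, and suppose $I+\lambda W = R^T R$ for some real matrix $R$ all of whose entries are non-negative. Then for every $z\in\mathbb{C}^n$ the function $x\mapsto D_{\lambda,W}(x;z)$ is convex on $\mathbb{C}^n$ (viewed as $\mathbb{R}^{2n}$).
   Context: For $x\in\mathbb{C}^n$, $|x|$ denotes the vector of magnitudes $(|x_1|,\dots,|x_n|)$ and $\|x\|_1=\sum_i |x_i|$. The penalty is $P_W(x)=\|x\|_1+\frac12\sum_{i,j} w_{i,j}|x_i x_j| = \|x\|_1+\frac12|x|^T W|x|$. For $\lambda\ge0$ and $z\in\mathbb{C}^n$, $D_{\lambda,W}(x;z)=\frac12\|z-x\|_2^2+\lambda P_W(x)$. *)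

theory Defs
  imports "HOL-Analysis.Analysis"
begin

definition cabsvec :: "complex ^ 'n \<Rightarrow> real ^ 'n" where
  "cabsvec x = (\<chi> i. cmod (x $ i))"

definition penalty :: "real ^ 'n ^ 'n \<Rightarrow> complex ^ 'n \<Rightarrow> real" where
  "penalty W x = (\<Sum>i\<in>UNIV. cmod (x $ i))
      + (1/2) * (\<Sum>i\<in>UNIV. \<Sum>j\<in>UNIV. (W $ i $ j) * cmod (x $ i * x $ j))"

definition Dfun :: "real \<Rightarrow> real ^ 'n ^ 'n \<Rightarrow> complex ^ 'n \<Rightarrow> complex ^ 'n \<Rightarrow> real" where
  "Dfun lam W z x = (1/2) * (norm (z - x))\<^sup>2 + lam * penalty W x"

end

theory Submission
  imports Defs
begin

lemma conv_sumf:
  assumes "finite A" "\<And>i. i \<in> A \<Longrightarrow> convex_on UNIV (f i)"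
  shows "convex_on UNIV (\<lambda>x. \<Sum>i\<in>A. f i x)"
  using assms
proof (induction A rule: finite_induct)
  case empty thus ?case by (simp add: convex_on_const)
next
  case (insert a A)
  thus ?case by (simp add: convex_on_add)
qed

lemma conv_sq:
  fixes f :: "'a::real_vector \<Rightarrow> real"
  assumes "convex_on UNIV f" "\<And>x. f x \<ge> 0"
  shows "convex_on UNIV (\<lambda>x. (f x)^2)"
proof (rule convex_onI)
  fix t x y :: _ assume t: "(0::real) < t" "t < 1"
  have "f ((1 - t) *\<^sub>R x + t *\<^sub>R y) \<le> (1 - t) * f x + t * f y"
    using convex_onD[OF assms(1), of t x y] t by auto
  hence "(f ((1 - t) *\<^sub>R x + t *\<^sub>R y))^2 \<le> ((1 - t) * f x + t * f y)^2"
    using assms(2) by (intro power_mono) auto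
  also have "\<dots> \<le> (1 - t) * (f x)^2 + t * (f y)^2"
  proof -
    have "(1 - t) * (f x)^2 + t * (f y)^2 - ((1 - t) * f x + t * f y)^2 = t*(1-t)*(f x - f y)^2"
      by (simp add: algebra_simps power2_eq_square)
    moreover have "t*(1-t)*(f x - f y)^2 \<ge> 0" using t by simp
    ultimately show ?thesis by linarith
  qed
  finally show "(f ((1 - t) *\<^sub>R x + t *\<^sub>R y))^2 \<le> (1 - t) * (f x)^2 + t * (f y)^2" .
qed simp

lemma conv_comp:
  "convex_on UNIV (\<lambda>x::complex^'n. cmod (x$j))"
proof (rule convex_onI)
  fix t :: real and x y :: "complex^'n" assume t: "0 < t" "t < 1"
  have "cmod (((1 - t) *\<^sub>R x + t *\<^sub>R y) $ j) = cmod ((1 - t) *\<^sub>R (x$j) + t *\<^sub>R (y$j))"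
    by simp
  also have "\<dots> \<le> cmod ((1 - t) *\<^sub>R (x$j)) + cmod (t *\<^sub>R (y$j))" by (rule norm_triangle_ineq)
  also have "\<dots> = (1 - t) * cmod (x$j) + t * cmod (y$j)" using t by simp
  finally show "cmod (((1 - t) *\<^sub>R x + t *\<^sub>R y) $ j) \<le> (1 - t) * cmod (x$j) + t * cmod (y$j)" .
qed simp

lemma conv_lin:
  "convex_on UNIV (\<lambda>x::complex^'n. - Re (cnj c * x$j))"
proof (rule convex_onI)
  fix t :: real and x y :: "complex^'n"
  show "- Re (cnj c * ((1 - t) *\<^sub>R x + t *\<^sub>R y) $ j) \<le> (1 - t) * - Re (cnj c * x$j) + t * - Re (cnj c * y$j)"
    unfolding vector_add_component vector_scaleR_component
    by (simp add: scaleR_conv_of_real algebra_simps)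
qed simp

lemma cmod_diff_sq: "(cmod (z - x))^2 = (cmod z)^2 - 2 * Re (cnj z * x) + (cmod x)^2"
  unfolding cmod_power2 by (simp add: algebra_simps power2_eq_square)

lemma norm_vec_sq: "(norm (x::complex^'n))^2 = (\<Sum>i\<in>UNIV. (cmod (x$i))^2)"
  by (simp add: norm_vec_def L2_set_def sum_nonneg)

lemma quad_expand:
  fixes R :: "real ^ 'n ^ 'm" and a :: "'n \<Rightarrow> real"
  shows "(\<Sum>k\<in>UNIV. (\<Sum>j\<in>UNIV. R$k$j * a j)^2)
        = (\<Sum>i\<in>UNIV. \<Sum>j\<in>UNIV. (\<Sum>k\<in>UNIV. R$k$i * R$k$j) * (a i * a j))"
proof -
  have "(\<Sum>k\<in>UNIV. (\<Sum>j\<in>UNIV. R$k$j * a j)^2)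
        = (\<Sum>k\<in>UNIV. \<Sum>i\<in>UNIV. \<Sum>j\<in>UNIV. (R$k$i * R$k$j) * (a i * a j))"
    unfolding power2_eq_square sum_product by (simp add: mult_ac)
  also have "\<dots> = (\<Sum>i\<in>UNIV. \<Sum>k\<in>UNIV. \<Sum>j\<in>UNIV. (R$k$i * R$k$j) * (a i * a j))"
    by (rule sum.swap)
  also have "\<dots> = (\<Sum>i\<in>UNIV. \<Sum>j\<in>UNIV. \<Sum>k\<in>UNIV. (R$k$i * R$k$j) * (a i * a j))"
    by (rule sum.cong[OF refl], rule sum.swap)
  also have "\<dots> = (\<Sum>i\<in>UNIV. \<Sum>j\<in>UNIV. (\<Sum>k\<in>UNIV. R$k$i * R$k$j) * (a i * a j))"
    by (simp only: sum_distrib_right)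
  finally show ?thesis .
qed

theorem mainTheorem2:
  fixes W :: "real ^ 'n ^ 'n" and R :: "real ^ 'n ^ 'm" and lam :: real
    and z :: "complex ^ 'n"
  assumes "transpose W = W"
    and "\<forall>i j. W $ i $ j \<ge> 0"
    and "\<forall>i. W $ i $ i = 0"
    and "lam \<ge> 0"
    and "mat 1 + lam *\<^sub>R W = transpose R ** R"
    and "\<forall>i j. R $ i $ j \<ge> 0"
  shows "convex_on UNIV (Dfun lam W z)"
proof -
  have ent: "(if i = j then 1 else 0) + lam * W$i$j = (\<Sum>k\<in>UNIV. R$k$i * R$k$j)" for i j
  proof -
    have "(mat 1 + lam *\<^sub>R W)$i$j = (transpose R ** R)$i$j" using assms(5) by simp
    thus ?thesis by (simp add: mat_def matrix_matrix_mult_def transpose_def)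
  qed
  have key: "(\<Sum>i\<in>UNIV. (a i)^2) + lam * (\<Sum>i\<in>UNIV. \<Sum>j\<in>UNIV. W$i$j * (a i * a j))
      = (\<Sum>k\<in>UNIV. (\<Sum>j\<in>UNIV. R$k$j * a j)^2)" for a :: "'n \<Rightarrow> real"
  proof -
    have ifm: "(if P then 1 else 0) * (y::real) = (if P then y else 0)" for P y by simp
    have "(\<Sum>k\<in>UNIV. (\<Sum>j\<in>UNIV. R$k$j * a j)^2)
        = (\<Sum>i\<in>UNIV. \<Sum>j\<in>UNIV. (\<Sum>k\<in>UNIV. R$k$i * R$k$j) * (a i * a j))"
      by (rule quad_expand)
    also have "\<dots> = (\<Sum>i\<in>UNIV. \<Sum>j\<in>UNIV. ((if i = j then 1 else 0) + lam * W$i$j) * (a i * a j))"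
      by (simp add: ent)
    also have "\<dots> = (\<Sum>i\<in>UNIV. \<Sum>j\<in>UNIV. (if i = j then a i * a j else 0) + lam * (W$i$j * (a i * a j)))"
      by (intro sum.cong refl) (simp add: distrib_right ifm mult.assoc)
    also have "\<dots> = (\<Sum>i\<in>UNIV. (\<Sum>j\<in>UNIV. (if i = j then a i * a j else 0)) + (\<Sum>j\<in>UNIV. lam * (W$i$j * (a i * a j))))"
      by (simp add: sum.distrib)
    also have "\<dots> = (\<Sum>i\<in>UNIV. (a i)^2 + lam * (\<Sum>j\<in>UNIV. W$i$j * (a i * a j)))"
      by (simp add: power2_eq_square sum_distrib_left)
    also have "\<dots> = (\<Sum>i\<in>UNIV. (a i)^2) + lam * (\<Sum>i\<in>UNIV. \<Sum>j\<in>UNIV. W$i$j * (a i * a j))"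
      by (simp add: sum.distrib sum_distrib_left)
    finally show ?thesis by (rule sym)
  qed
  define C where "C = (1/2) * (\<Sum>i\<in>UNIV. (cmod (z$i))^2)"
  have eq: "Dfun lam W z x = C + (\<Sum>i\<in>UNIV. - Re (cnj (z$i) * x$i))
     + lam * (\<Sum>i\<in>UNIV. cmod (x$i))
     + (1/2) * (\<Sum>k\<in>UNIV. (\<Sum>j\<in>UNIV. R$k$j * cmod (x$j))^2)" for x
  proof -
    have n: "(norm (z - x))^2 = (\<Sum>i\<in>UNIV. (cmod (z$i))^2) + 2 * (\<Sum>i\<in>UNIV. - Re (cnj (z$i) * x$i))
        + (\<Sum>i\<in>UNIV. (cmod (x$i))^2)"
      by (simp add: norm_vec_sq cmod_diff_sq sum.distrib sum_subtractf sum_distrib_left sum_negf)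
    have m: "(\<Sum>i\<in>UNIV. \<Sum>j\<in>UNIV. W$i$j * cmod (x$i * x$j))
        = (\<Sum>i\<in>UNIV. \<Sum>j\<in>UNIV. W$i$j * (cmod (x$i) * cmod (x$j)))"
      by (simp add: norm_mult)
    have k: "(\<Sum>i\<in>UNIV. (cmod (x$i))^2) + lam * (\<Sum>i\<in>UNIV. \<Sum>j\<in>UNIV. W$i$j * (cmod (x$i) * cmod (x$j)))
      = (\<Sum>k\<in>UNIV. (\<Sum>j\<in>UNIV. R$k$j * cmod (x$j))^2)"
      by (rule key)
    show ?thesis
      unfolding Dfun_def penalty_def C_def n m k[symmetric]
      by (simp add: algebra_simps)
  qed
  have c1: "convex_on UNIV (\<lambda>x::complex^'n. \<Sum>i\<in>UNIV. - Re (cnj (z$i) * x$i))"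
    by (rule conv_sumf) (simp, rule conv_lin)
  have c2: "convex_on UNIV (\<lambda>x::complex^'n. lam * (\<Sum>i\<in>UNIV. cmod (x$i)))"
    using assms(4) by (intro convex_on_cmul conv_sumf conv_comp) auto
  have c3: "convex_on UNIV (\<lambda>x::complex^'n. (1/2) * (\<Sum>k\<in>UNIV. (\<Sum>j\<in>UNIV. R$k$j * cmod (x$j))^2))"
  proof -
    have g: "convex_on UNIV (\<lambda>x::complex^'n. (\<Sum>j\<in>UNIV. R$k$j * cmod (x$j))^2)" for k
    proof (rule conv_sq)
      show "convex_on UNIV (\<lambda>x::complex^'n. \<Sum>j\<in>UNIV. R$k$j * cmod (x$j))"
        by (rule conv_sumf) (use assms(6) in \<open>auto intro: convex_on_cmul conv_comp\<close>)
      show "0 \<le> (\<Sum>j\<in>UNIV. R$k$j * cmod ((x::complex^'n)$j))" for x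
        using assms(6) by (intro sum_nonneg) auto
    qed
    show ?thesis by (rule convex_on_cmul) (simp, rule conv_sumf, simp, rule g)
  qed
  have "convex_on UNIV (\<lambda>x. C + (\<Sum>i\<in>UNIV. - Re (cnj (z$i) * x$i))
     + lam * (\<Sum>i\<in>UNIV. cmod (x$i))
     + (1/2) * (\<Sum>k\<in>UNIV. (\<Sum>j\<in>UNIV. R$k$j * cmod (x$j))^2))"
    by (intro convex_on_add c1 c2 c3) (simp add: convex_on_const)
  moreover have "Dfun lam W z = (\<lambda>x. C + (\<Sum>i\<in>UNIV. - Re (cnj (z$i) * x$i))
     + lam * (\<Sum>i\<in>UNIV. cmod (x$i))
     + (1/2) * (\<Sum>k\<in>UNIV. (\<Sum>j\<in>UNIV. R$k$j * cmod (x$j))^2))"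
    by (rule ext) (rule eq)
  ultimately show ?thesis by simp
qed

end
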